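(* For every integer $n$, \[ \sum_{k=1}^n(-1)^{k-1}F_k^{\,4}=\frac{(-1)^{n-1}}{3}F_nF_{n+1}F_{n-2}F_{n+3}\,. \]
   Context: $F_i$ denotes the Fibonacci numbers, defined for all $i\in\mathbb{Z}$ by $F_i=F_{i-1}+F_{i-2}$, $F_0=0$, $F_1=1$; equivalently $F_{-i}=(-1)^{i-1}F_i$. Summation convention for an arbitrary integer upper limit: $\sum_{k=a}^{a-1} f(k)=0$, and for $n<a-1$, $\sum_{k=a}^{n} f(k) = -\sum_{k=n+1}^{a-1} f(k)$. *)

theory Defs
  imports Complex_Main "HOL-Number_Theory.Fib"
begin

definition fibz :: "int \<Rightarrow> int" where
  "fibz i = (if 0 \<le> i then int (fib (nat i))
             else (-1) ^ (nat (-i) - 1) * int (fib (nat (-i))))"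

text \<open>Sum with arbitrary integer upper limit:
  sum_{k=a}^{n} f k = 0 if n = a-1, and = - sum_{k=n+1}^{a-1} f k if n < a-1.\<close>
definition gsum :: "int \<Rightarrow> int \<Rightarrow> (int \<Rightarrow> 'a::ab_group_add) \<Rightarrow> 'a" where
  "gsum a n f = (if a - 1 \<le> n then sum f {a..n} else - sum f {n+1..a-1})"

end

theory Submission
  imports Defs
begin

lemma fibz_neg: "fibz (- int m) = (if m = 0 then 0 else (-1) ^ (m - 1) * int (fib m))"
proof (cases m)
  case (Suc k)
  have "nat (int m) = m" by simp
  then show ?thesis using Suc by (simp add: fibz_def del: of_nat_Suc)
qed (simp add: fibz_def)

lemma fibz_nat: "fibz (int m) = int (fib m)"
  by (simp add: fibz_def)

lemma fibz_rec: "fibz (i + 2) = fibz (i + 1) + fibz i"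
proof (cases "i \<ge> 0")
  case True
  then obtain m where m: "i = int m" by (metis nonneg_eq_int)
  have "i + 2 = int (Suc (Suc m))" "i + 1 = int (Suc m)" using m by auto
  then show ?thesis using m by (simp only: fibz_nat) simp
next
  case False
  define m where "m = nat (- i)"
  have m: "i = - int m" "m \<ge> 1" using False unfolding m_def by auto
  show ?thesis
  proof (cases m)
    case 0 then show ?thesis using m by simp
  next
    case (Suc m1)
    show ?thesis
    proof (cases m1)
      case 0
      then have "i = -1" using m Suc by simp
      then show ?thesis by (simp add: fibz_def)
    next
      case (Suc m2)
      note S2 = Suc
      show ?thesis
      proof (cases m2)
        case 0
        then have "i = -2" using m `m = Suc m1` Suc S2 by simp
        then show ?thesis by (simp add: fibz_def)
      next
        case (Suc j)
        have e: "i = - int (j+3)" "i + 1 = - int (j+2)" "i + 2 = - int (j+1)"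
          using m `m = Suc m1` S2 Suc by auto
        have "fibz i = (-1)^(j+2) * int (fib (j+3))" unfolding e(1) fibz_neg by simp
        moreover have "fibz (i+1) = (-1)^(j+1) * int (fib (j+2))" unfolding e(2) fibz_neg by simp
        moreover have "fibz (i+2) = (-1)^j * int (fib (j+1))" unfolding e(3) fibz_neg by simp
        moreover have "fib (j+3) = fib (j+2) + fib (j+1)"
          using fib.simps(3)[of "j+1"] by (simp add: numeral_3_eq_3 numeral_2_eq_2)
        ultimately show ?thesis by (simp add: algebra_simps)
      qed
    qed
  qed
qed

lemma fibz_rec': "fibz (i + 1) = fibz i + fibz (i - 1)"
  using fibz_rec[of "i - 1"] by (simp add: algebra_simps)

lemma gsum_step: "gsum 1 n f = gsum 1 (n - 1) f + f n"
proof -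
  consider "n \<ge> 1" | "n = 0" | "n < 0" by linarith
  then show ?thesis
  proof cases
    case 1
    have "{1..n} = insert n {1..n-1}" using 1 by auto
    then show ?thesis using 1 by (simp add: gsum_def add.commute)
  next
    case 2 then show ?thesis by (simp add: gsum_def)
  next
    case 3
    have "{n..0} = insert n {n+1..0}" using 3 by auto
    then show ?thesis using 3 by (simp add: gsum_def)
  qed
qed

definition R :: "int \<Rightarrow> real" where
  "R n = (-1::real) powi (n - 1) / 3
         * of_int (fibz n * fibz (n + 1) * fibz (n - 2) * fibz (n + 3))"

lemma R_step: "R n - R (n - 1) = (-1::real) powi (n - 1) * (of_int (fibz n)) ^ 4"
proof -
  define a where "a = fibz (n - 1)"
  define b where "b = fibz n"
  have f1: "fibz (n+1) = a + b" unfolding a_def b_def using fibz_rec'[of n] by simp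
  have f2: "fibz (n+2) = a + 2*b" using fibz_rec[of n] f1 b_def by simp
  have f3: "fibz (n+3) = 2*a + 3*b" using fibz_rec[of "n+1"] f1 f2 by (simp add: add.assoc)
  have fm2: "fibz (n-2) = b - a" using fibz_rec'[of "n-1"] a_def b_def by simp
  have fm3: "fibz (n-3) = 2*a - b" using fibz_rec'[of "n-2"] a_def fm2 by (simp add: algebra_simps)
  define s where "s = (-1::real) powi (n - 1)"
  have s2: "(-1::real) powi (n - 1 - 1) = - s"
  proof -
    have "(-1::real) powi (n - 1) = (-1) powi (n - 1 - 1) * (-1) powi 1"
      by (metis diff_add_cancel power_int_add neg_one_neq_zero )
    then show ?thesis unfolding s_def by simp
  qed
  have "R (n-1) = - s / 3 * of_int (fibz (n-1) * fibz n * fibz (n-3) * fibz (n+2))"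
    unfolding R_def using s2 by (simp add: algebra_simps)
  also have "\<dots> = - s / 3 * of_int (a * b * (2*a - b) * (a + 2*b))"
    using f2 fm3 a_def b_def by simp
  finally have r1: "R (n-1) = - s / 3 * of_int (a * b * (2*a - b) * (a + 2*b))" .
  have r0: "R n = s / 3 * of_int (b * (a+b) * (b-a) * (2*a+3*b))"
    unfolding R_def s_def using f1 f3 fm2 b_def by simp
  show ?thesis unfolding r0 r1 s_def[symmetric] b_def[symmetric]
    by (simp add: algebra_simps power4_eq_xxxx)
qed

theorem corollary3:
  fixes n :: int
  shows "gsum 1 n (\<lambda>k. (-1::real) powi (k - 1) * (of_int (fibz k)) ^ 4)
       = (-1::real) powi (n - 1) / 3
         * of_int (fibz n * fibz (n + 1) * fibz (n - 2) * fibz (n + 3))"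
proof -
  let ?f = "\<lambda>k. (-1::real) powi (k - 1) * (of_int (fibz k)) ^ 4"
  have "gsum 1 n ?f = R n"
  proof (induction n rule: int_induct[where k=0])
    case base
    show ?case by (simp add: gsum_def R_def fibz_def)
  next
    case (step1 i)
    have "gsum 1 (i+1) ?f = gsum 1 i ?f + ?f (i+1)" using gsum_step[of "i+1" ?f] by simp
    also have "\<dots> = R (i+1)" using step1(2) R_step[of "i+1"] by simp
    finally show ?case .
  next
    case (step2 i)
    have "gsum 1 (i-1) ?f = gsum 1 i ?f - ?f i" using gsum_step[of i ?f] by simp
    also have "\<dots> = R (i-1)" using step2(2) R_step[of i] by simp
    finally show ?case .
  qed
  then show ?thesis by (simp add: R_def)
qed

end
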